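(* Let $\Lambda:\mathbb{R}\to[0,1]$ be decreasing. The map $\mathrm{ES}_\Lambda:L^1\to\overline{\mathbb{R}}$ satisfies $$-\infty<\mathbb E[X]\le\mathrm{ES}_\Lambda(X)\le\mathrm{ES}_1(X),\quad X\in L^1.$$ In particular, for $X\in L^1$, $\mathrm{ES}_\Lambda(X)$ is finite if and only if $\mathrm{VaR}_1(X)<\infty$ or $\Lambda$ is not constantly $1$.
   Context: $(\Omega,\mathcal F,\mathbb P)$ is an atomless probability space, $L^0$ all random variables, $L^1$ integrable ones; $\overline{\mathbb{R}}=[-\infty,\infty]$; "decreasing" is weak; $\wedge=\min$. For $\alpha\in[0,1]$, $X\in L^0$: $\mathrm{VaR}_\alpha(X)=\inf\{x\in\mathbb{R}:\mathbb P(X\le x)\ge\alpha\}$ (so $\mathrm{VaR}_1(X)$ is the essential supremum, possibly $\infty$). For $X\in L^1$: $\mathrm{ES}_\alpha(X)=\frac{1}{1-\alpha}\int_\alpha^1\mathrm{VaR}_\beta(X)\,\mathrm d\beta$ for $\alpha\in[0,1)$ and $\mathrm{ES}_1(X)=\mathrm{VaR}_1(X)$; for decreasing $\Lambda$, $\mathrm{ES}_\Lambda(X)=\sup_{x\in\mathbb{R}}\left(\mathrm{ES}_{\Lambda(x)}(X)\wedge x\right)$, $X\in L^1$. *)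

theory Defs
  imports "HOL-Probability.Probability"
begin

definition atomless :: "'a measure \<Rightarrow> bool" where
  "atomless M \<longleftrightarrow> (\<forall>A\<in>sets M. measure M A > 0 \<longrightarrow>
      (\<exists>B\<in>sets M. B \<subseteq> A \<and> 0 < measure M B \<and> measure M B < measure M A))"

text \<open>Value-at-Risk: VaR_alpha(X) = inf {x in R. P(X <= x) >= alpha}, valued in extended reals
  (inf of the empty set is +infinity).\<close>
definition VaR :: "'a measure \<Rightarrow> real \<Rightarrow> ('a \<Rightarrow> real) \<Rightarrow> ereal" where
  "VaR M \<alpha> X = Inf (ereal ` {x::real. measure M {\<omega> \<in> space M. X \<omega> \<le> x} \<ge> \<alpha>})"

text \<open>Expected Shortfall for integrable X: ES_alpha(X) = 1/(1-alpha) int_alpha^1 VaR_beta(X) d beta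
  for alpha < 1, and ES_1(X) = VaR_1(X). (For X in L^1, VaR_beta(X) is finite for beta in (0,1).)\<close>
definition ES :: "'a measure \<Rightarrow> real \<Rightarrow> ('a \<Rightarrow> real) \<Rightarrow> ereal" where
  "ES M \<alpha> X = (if \<alpha> = 1 then VaR M 1 X
     else ereal ((1 / (1 - \<alpha>)) * (LINT \<beta>:{\<alpha><..<1}|lborel. real_of_ereal (VaR M \<beta> X))))"

definition ES_Lambda :: "'a measure \<Rightarrow> (real \<Rightarrow> real) \<Rightarrow> ('a \<Rightarrow> real) \<Rightarrow> ereal" where
  "ES_Lambda M \<Lambda> X = (SUP x\<in>(UNIV::real set). min (ES M (\<Lambda> x) X) (ereal x))"

end

theory Submission imports Defs begin

lemma Inf_ereal_atLeast: "Inf (ereal ` {a..}) = ereal a"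
  by (rule antisym) (auto intro!: Inf_lower Inf_greatest)

context
  fixes M :: "'a measure" and X :: "'a \<Rightarrow> real"
  assumes P: "prob_space M" and int: "integrable M X"
begin

definition "D = distr M borel X"
definition "Q \<beta> = Inf {x. \<beta> \<le> cdf D x}"

lemma Xmeas[measurable]: "X \<in> borel_measurable M" using int by auto

lemma cdfD: "cdf D x = measure M {\<omega> \<in> space M. X \<omega> \<le> x}"
  unfolding cdf_def2 D_def
  by (subst measure_distr) (auto intro!: arg_cong2[where f=measure])

lemma cdfdist: "cdf_distribution D"
proof -
  interpret prob_space M by (rule P)
  show ?thesis unfolding cdf_distribution_def D_def by (rule real_distribution_distr) simp
qed

lemma VaR_Q: assumes "0 < \<beta>" "\<beta> < 1" shows "VaR M \<beta> X = ereal (Q \<beta>)"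
proof -
  interpret cdf_distribution D by (rule cdfdist)
  have "{x. \<beta> \<le> measure M {\<omega> \<in> space M. X \<omega> \<le> x}} = {Q \<beta>..}"
  proof (intro set_eqI)
    fix x
    show "x \<in> {x. \<beta> \<le> measure M {\<omega> \<in> space M. X \<omega> \<le> x}} \<longleftrightarrow> x \<in> {Q \<beta>..}"
      using pseudoinverse[OF assms, of x] unfolding cdfD Q_def by simp
  qed
  then show ?thesis unfolding VaR_def by (simp add: Inf_ereal_atLeast)
qed

lemma Q_mono: assumes "0 < a" "a \<le> b" "b < 1" shows "Q a \<le> Q b"
proof -
  interpret cdf_distribution D by (rule cdfdist)
  have "a \<in> {0<..<1}" "b \<in> {0<..<1}" using assms by auto
  then show ?thesis
    using mono_I assms(2) unfolding mono_on_def Q_def by blast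
qed

lemma Q_int: "set_integrable lborel {0<..<1} Q \<and> (LINT \<beta>:{0<..<1}|lborel. Q \<beta>) = integral\<^sup>L M X"
proof -
  interpret cdf_distribution D by (rule cdfdist)
  have e: "distr (restrict_space lborel {0<..<1::real}) borel Q = D"
    using distr_I_eq_M unfolding Q_def[abs_def] .
  have m: "Q \<in> borel_measurable (restrict_space lborel {0<..<1})"
    using measurable_CI unfolding Q_def[abs_def]
    by (simp add: measurable_def space_restrict_space sets_restrict_space)
  have "integrable D (\<lambda>x. x)" unfolding D_def using int
    by (subst integrable_distr_eq) auto
  hence "integrable (restrict_space lborel {0<..<1}) Q"
    unfolding e[symmetric] using m by (subst (asm) integrable_distr_eq) auto
  hence 1: "set_integrable lborel {0<..<1} Q"
    by (subst set_integrable_eq) auto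
  have "integral\<^sup>L D (\<lambda>x. x) = integral\<^sup>L M X" unfolding D_def
    by (subst integral_distr) auto
  moreover have "integral\<^sup>L D (\<lambda>x. x) = integral\<^sup>L (restrict_space lborel {0<..<1}) Q"
    unfolding e[symmetric] using m by (subst integral_distr) auto
  moreover have "integral\<^sup>L (restrict_space lborel {0<..<1::real}) Q = (LINT \<beta>:{0<..<1}|lborel. Q \<beta>)"
    unfolding set_lebesgue_integral_def by (subst integral_restrict_space) auto
  ultimately show ?thesis using 1 by simp
qed


definition "q \<beta> = real_of_ereal (VaR M \<beta> X)"

lemma q_Q: "0 < \<beta> \<Longrightarrow> \<beta> < 1 \<Longrightarrow> q \<beta> = Q \<beta>"
  unfolding q_def using VaR_Q by simp

lemma q_int: "set_integrable lborel {0<..<1} q" "(LINT \<beta>:{0<..<1}|lborel. q \<beta>) = integral\<^sup>L M X"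
proof -
  have c: "set_integrable lborel {0<..<1} q = set_integrable lborel {0<..<1} Q"
    by (rule set_integrable_cong) (auto simp: q_Q)
  have d: "(LINT \<beta>:{0<..<1}|lborel. q \<beta>) = (LINT \<beta>:{0<..<1}|lborel. Q \<beta>)"
    by (rule set_lebesgue_integral_cong) (auto simp: q_Q)
  show "set_integrable lborel {0<..<1} q" using c Q_int by simp
  show "(LINT \<beta>:{0<..<1}|lborel. q \<beta>) = integral\<^sup>L M X" using d Q_int by simp
qed

lemma q_int_sub: "0 \<le> \<alpha> \<Longrightarrow> set_integrable lborel {\<alpha><..<1} q"
  by (rule set_integrable_subset[OF q_int(1)]) auto

lemma sic: fixes a b c :: real shows "set_integrable lborel {a<..b} (\<lambda>_. c::real)" "set_integrable lborel {a<..<b} (\<lambda>_. c::real)"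
proof -
  have "emeasure lborel {a<..b} < \<infinity>" by (intro emeasure_bounded_finite bounded_subset[OF compact_imp_bounded[OF compact_Icc[of a b]]]) auto
  then show "set_integrable lborel {a<..b} (\<lambda>_. c::real)"
    unfolding set_integrable_def by (intro integrable_indicator) auto
  have "emeasure lborel {a<..<b} < \<infinity>" by (intro emeasure_bounded_finite) auto
  then show "set_integrable lborel {a<..<b} (\<lambda>_. c::real)"
    unfolding set_integrable_def by (intro integrable_indicator) auto
qed

lemma ES_ge_lt1: assumes "0 \<le> \<alpha>" "\<alpha> < 1"
  shows "integral\<^sup>L M X \<le> (1 / (1 - \<alpha>)) * (LINT \<beta>:{\<alpha><..<1}|lborel. q \<beta>)"
proof (cases "\<alpha> = 0")
  case True then show ?thesis using q_int by simp
next
  case False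
  hence a0: "0 < \<alpha>" using assms by simp
  define S where "S = (LINT \<beta>:{\<alpha><..<1}|lborel. q \<beta>)"
  define T where "T = (LINT \<beta>:{0<..\<alpha>}|lborel. q \<beta>)"
  define a where "a = q \<alpha>"
  have iT: "set_integrable lborel {0<..\<alpha>} q"
    by (rule set_integrable_subset[OF q_int(1)]) (use assms in auto)
  have iS: "set_integrable lborel {\<alpha><..<1} q" using q_int_sub assms by simp
  have un: "{0<..<1} = {0<..\<alpha>} \<union> {\<alpha><..<(1::real)}" using assms a0 by auto
  have E: "integral\<^sup>L M X = T + S"
    unfolding T_def S_def q_int(2)[symmetric] un
    by (rule set_integral_Un[OF _ iT iS]) auto
  have "T \<le> (LINT \<beta>:{0<..\<alpha>}|lborel. a)" unfolding T_def
  proof (rule set_integral_mono[OF iT sic(1)])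
    fix x assume "x \<in> {0<..\<alpha>}"
    then show "q x \<le> a" unfolding a_def using q_Q Q_mono assms by auto
  qed
  also have "\<dots> = \<alpha> * a" using a0 by (subst set_integral_const) auto
  finally have T: "T \<le> \<alpha> * a" .
  have "(LINT \<beta>:{\<alpha><..<1}|lborel. a) \<le> S" unfolding S_def
  proof (rule set_integral_mono[OF sic(2) iS])
    fix x assume "x \<in> {\<alpha><..<1}"
    then show "a \<le> q x" unfolding a_def using q_Q Q_mono assms a0 by auto
  qed
  moreover have "(LINT \<beta>:{\<alpha><..<1}|lborel. a) = (1 - \<alpha>) * a" using assms by (subst set_integral_const) auto
  ultimately have Sa: "(1 - \<alpha>) * a \<le> S" by simp
  have "(1 - \<alpha>) * integral\<^sup>L M X \<le> S"
  proof -
    have "(1 - \<alpha>) * integral\<^sup>L M X \<le> (1 - \<alpha>) * (\<alpha> * a + S)"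
      using E T assms by (intro mult_left_mono) auto
    also have "\<dots> = \<alpha> * ((1 - \<alpha>) * a) + (1 - \<alpha>) * S" by (simp add: algebra_simps)
    also have "\<dots> \<le> \<alpha> * S + (1 - \<alpha>) * S" using Sa a0 by (intro add_right_mono mult_left_mono) auto
    finally show ?thesis by (simp add: algebra_simps)
  qed
  then show ?thesis using assms unfolding S_def by (simp add: field_simps)
qed

lemma VaR1_ge: "ereal (integral\<^sup>L M X) \<le> VaR M 1 X"
  unfolding VaR_def
proof (rule Inf_greatest)
  interpret prob_space M by (rule P)
  fix y assume "y \<in> ereal ` {x. 1 \<le> measure M {\<omega> \<in> space M. X \<omega> \<le> x}}"
  then obtain x where y: "y = ereal x" and x: "1 \<le> measure M {\<omega> \<in> space M. X \<omega> \<le> x}" by auto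
  have "prob {\<omega> \<in> space M. X \<omega> \<le> x} = 1" using x by (intro antisym) auto
  hence "AE \<omega> in M. \<omega> \<in> {\<omega> \<in> space M. X \<omega> \<le> x}"
    by (subst (asm) prob_eq_1) auto
  hence "AE \<omega> in M. X \<omega> \<le> x" by auto
  hence "integral\<^sup>L M X \<le> integral\<^sup>L M (\<lambda>_. x)"
    using int by (intro integral_mono_AE) auto
  then show "ereal (integral\<^sup>L M X) \<le> y" using y by (simp add: prob_space)
qed

lemma ES_ge: "0 \<le> \<alpha> \<Longrightarrow> \<alpha> \<le> 1 \<Longrightarrow> ereal (integral\<^sup>L M X) \<le> ES M \<alpha> X"
  unfolding ES_def using VaR1_ge ES_ge_lt1[unfolded q_def] by auto

lemma ES_le: assumes "0 \<le> \<alpha>" "\<alpha> \<le> 1" shows "ES M \<alpha> X \<le> VaR M 1 X"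
proof (cases "\<alpha> = 1")
  case True then show ?thesis unfolding ES_def by simp
next
  case False
  hence a1: "\<alpha> < 1" using assms by simp
  show ?thesis unfolding VaR_def[of M 1]
  proof (rule Inf_greatest)
    fix y assume "y \<in> ereal ` {x. 1 \<le> measure M {\<omega> \<in> space M. X \<omega> \<le> x}}"
    then obtain x where y: "y = ereal x" and x: "1 \<le> measure M {\<omega> \<in> space M. X \<omega> \<le> x}" by auto
    have qx: "q \<beta> \<le> x" if "\<beta> \<in> {\<alpha><..<1}" for \<beta>
    proof -
      have b: "0 < \<beta>" "\<beta> < 1" using that assms by auto
      have "VaR M \<beta> X \<le> ereal x" unfolding VaR_def
        by (rule Inf_lower) (use x b in auto)
      then show ?thesis using VaR_Q[OF b] q_Q[OF b] by simp
    qed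
    have "(LINT \<beta>:{\<alpha><..<1}|lborel. q \<beta>) \<le> (LINT \<beta>:{\<alpha><..<1}|lborel. x)"
      by (rule set_integral_mono[OF q_int_sub[OF assms(1)] sic(2)]) (use qx in auto)
    also have "\<dots> = (1 - \<alpha>) * x" using a1 by (subst set_integral_const) auto
    finally have "(1 / (1 - \<alpha>)) * (LINT \<beta>:{\<alpha><..<1}|lborel. q \<beta>) \<le> x"
      using a1 by (simp add: field_simps)
    then show "ES M \<alpha> X \<le> y" using False y unfolding ES_def q_def by simp
  qed
qed

lemma ES_bound: assumes "0 \<le> c" "c \<le> a" "a < 1"
  shows "ES M c X \<le> ereal ((LINT \<beta>:{0<..<1}|lborel. \<bar>q \<beta>\<bar>) / (1 - a))"
proof -
  define K where "K = (LINT \<beta>:{0<..<1}|lborel. \<bar>q \<beta>\<bar>)"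
  have iA: "set_integrable lborel {0<..<1} (\<lambda>\<beta>. \<bar>q \<beta>\<bar>)" using set_integrable_abs[OF q_int(1)] .
  have K0: "0 \<le> K" unfolding K_def set_lebesgue_integral_def
    by (intro integral_nonneg_AE) (auto simp: indicator_def)
  have "(LINT \<beta>:{c<..<1}|lborel. q \<beta>) \<le> (LINT \<beta>:{c<..<1}|lborel. \<bar>q \<beta>\<bar>)"
    by (rule set_integral_mono[OF q_int_sub[OF assms(1)] set_integrable_abs[OF q_int_sub[OF assms(1)]]]) auto
  also have "\<dots> \<le> K" unfolding K_def set_lebesgue_integral_def
    using iA set_integrable_abs[OF q_int_sub[OF assms(1)]] unfolding set_integrable_def
    by (intro integral_mono) (use assms in \<open>auto simp: indicator_def\<close>)
  finally have S: "(LINT \<beta>:{c<..<1}|lborel. q \<beta>) \<le> K" .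
  have "(1 / (1 - c)) * (LINT \<beta>:{c<..<1}|lborel. q \<beta>) \<le> (1 / (1 - c)) * K"
    using S assms by (intro mult_left_mono) auto
  also have "\<dots> \<le> K / (1 - a)" using K0 assms
    by (simp add: divide_left_mono)
  finally show ?thesis using assms unfolding ES_def K_def q_def by simp
qed
end

theorem proposition6:
  fixes M :: "'a measure" and \<Lambda> :: "real \<Rightarrow> real" and X :: "'a \<Rightarrow> real"
  assumes "prob_space M" and "atomless M"
    and "antimono \<Lambda>" and "\<forall>x. 0 \<le> \<Lambda> x \<and> \<Lambda> x \<le> 1"
    and "integrable M X"
  shows "(-\<infinity> < ereal (integral\<^sup>L M X) \<and> ereal (integral\<^sup>L M X) \<le> ES_Lambda M \<Lambda> X
           \<and> ES_Lambda M \<Lambda> X \<le> ES M 1 X)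
         \<and> (\<bar>ES_Lambda M \<Lambda> X\<bar> \<noteq> \<infinity> \<longleftrightarrow> (VaR M 1 X < \<infinity> \<or> \<not> (\<forall>x. \<Lambda> x = 1)))"
proof -
  note P = assms(1) and I = assms(5)
  have L01: "0 \<le> \<Lambda> x" "\<Lambda> x \<le> 1" for x using assms(4) by auto
  define L where "L = ES_Lambda M \<Lambda> X"
  define E where "E = integral\<^sup>L M X"
  have ge: "ereal E \<le> L"
  proof -
    have "ereal E \<le> min (ES M (\<Lambda> E) X) (ereal E)"
      using ES_ge[OF P I L01] unfolding E_def by simp
    also have "\<dots> \<le> L" unfolding L_def ES_Lambda_def by (rule SUP_upper) simp
    finally show ?thesis .
  qed
  have ES1: "ES M 1 X = VaR M 1 X" unfolding ES_def by simp
  have le: "L \<le> ES M 1 X" unfolding L_def ES_Lambda_def ES1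
  proof (rule SUP_least)
    fix x
    have "min (ES M (\<Lambda> x) X) (ereal x) \<le> ES M (\<Lambda> x) X" by simp
    also have "\<dots> \<le> VaR M 1 X" using ES_le[OF P I L01] .
    finally show "min (ES M (\<Lambda> x) X) (ereal x) \<le> VaR M 1 X" .
  qed
  have fin: "\<bar>L\<bar> \<noteq> \<infinity> \<longleftrightarrow> L < \<infinity>" using ge by (cases L) auto
  have "L < \<infinity> \<longleftrightarrow> (VaR M 1 X < \<infinity> \<or> \<not> (\<forall>x. \<Lambda> x = 1))"
  proof
    assume "L < \<infinity>"
    show "VaR M 1 X < \<infinity> \<or> \<not> (\<forall>x. \<Lambda> x = 1)"
    proof (rule ccontr)
      assume "\<not> ?thesis"
      hence V: "VaR M 1 X = \<infinity>" and l1: "\<And>x. \<Lambda> x = 1" by auto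
      have "L = \<infinity>"
      proof (rule ereal_top)
        fix B
        have "ereal B = min (ES M (\<Lambda> B) X) (ereal B)" using V l1 ES1 by simp
        also have "\<dots> \<le> L" unfolding L_def ES_Lambda_def by (rule SUP_upper) simp
        finally show "ereal B \<le> L" .
      qed
      with \<open>L < \<infinity>\<close> show False by simp
    qed
  next
    assume "VaR M 1 X < \<infinity> \<or> \<not> (\<forall>x. \<Lambda> x = 1)"
    then show "L < \<infinity>"
    proof
      assume "VaR M 1 X < \<infinity>" then show ?thesis using le ES1 by (metis le_less_trans)
    next
      assume "\<not> (\<forall>x. \<Lambda> x = 1)"
      then obtain x0 where "\<Lambda> x0 \<noteq> 1" by auto
      hence a1: "\<Lambda> x0 < 1" using L01[of x0] by simp
      define K where "K = (LINT \<beta>:{0<..<1}|lborel. \<bar>q M X \<beta>\<bar>)"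
      have "L \<le> ereal (max x0 (K / (1 - \<Lambda> x0)))" unfolding L_def ES_Lambda_def
      proof (rule SUP_least)
        fix x
        show "min (ES M (\<Lambda> x) X) (ereal x) \<le> ereal (max x0 (K / (1 - \<Lambda> x0)))"
        proof (cases "x \<le> x0")
          case True
          have "min (ES M (\<Lambda> x) X) (ereal x) \<le> ereal x" by simp
          also have "\<dots> \<le> ereal (max x0 (K / (1 - \<Lambda> x0)))" using True by (metis ereal_less_eq(3) max.coboundedI1)
          finally show ?thesis .
        next
          case False
          have c: "\<Lambda> x \<le> \<Lambda> x0" using assms(3) False by (simp add: antimonoD)
          have "min (ES M (\<Lambda> x) X) (ereal x) \<le> ES M (\<Lambda> x) X" by simp
          also have "\<dots> \<le> ereal (K / (1 - \<Lambda> x0))"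
            unfolding K_def by (rule ES_bound[OF P I L01(1) c a1])
          also have "\<dots> \<le> ereal (max x0 (K / (1 - \<Lambda> x0)))" by simp
          finally show ?thesis .
        qed
      qed
      moreover have "ereal (max x0 (K / (1 - \<Lambda> x0))) < \<infinity>" by (rule less_ereal.simps(4)[THEN iffD2, OF TrueI])
      ultimately show ?thesis by (rule le_less_trans)
    qed
  qed
  then show ?thesis using ge le fin unfolding L_def E_def by simp
qed

end
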